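(* Let $S=\langle n_k\rangle_{k=1}^{3m}$ be an instance of 3-Partition (with $n_1\ge\cdots\ge n_{3m}$) and let $\mathrm{Ver}_S$, $w_S$ be as defined below. If $\langle i_k\rangle_{k=1}^{3m}$ is a permutation (reordering) of $\langle n_k\rangle_{k=1}^{3m}$, then the configuration $\prod_{k=1}^{3m}(a_1b^{i_k}a_2)\,\|\,\mathrm{Ver}_S$ is accepted. Consequently, if $S$ is a "yes" instance of 3-Partition, then $\varepsilon\,\|\,w_S\vdash^*\varepsilon\,\|\,\varepsilon$ and $w_S$ is a square.
   Context: Queue automaton: a configuration is written $Q\,\|\,x$ ($Q$ = queue contents, $x$ = remaining input); a step from $Q\,\|\,\sigma x$ ($\sigma$ a symbol) goes either to $Q\sigma\,\|\,x$ (push) or, if $Q=\sigma Q'$, to $Q'\,\|\,x$ (match/pop). $\vdash^*$ is zero or more steps; $\varepsilon$ is the empty string; a configuration $C$ is accepted if $C\vdash^*\varepsilon\,\|\,\varepsilon$. A string $w$ is a square if it is a shuffle of some string $u$ with itself, i.e. there are strings $x_i,y_i$ with $u=x_1\cdots x_k=y_1\cdots y_k$ and $w=x_1y_1\cdots x_ky_k$. An instance of 3-Partition is a sequence $S=\langle n_i:1\le i\le 3m\rangle$ of natural numbers such that $B=(\sum_{i=1}^{3m}n_i)/m$ is an integer and $B/4<n_i<B/2$ for all $i$; it is a "yes" instance if it can be partitioned into $m$ disjoint subsequences each having exactly three elements summing to $B$. Throughout, the $n_i$ are assumed to be in non-increasing order. The alphabet is $\{a_1,a_2,b,e_0,e,c_1,c_2,x,y\}$;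 $u^i$ denotes $i$ concatenated copies of $u$ and $\prod_{\ell=1}^k u_\ell=u_1u_2\cdots u_k$. Define $U_\ell=a_1^2b^\ell a_2^2$, $v_\ell=c_1x^\ell y^\ell c_2$, $D_k=U_{n_k}^{3m-k+1}$, $E_k=U_B^{3m-k}\,a_1b^{n_k}a_2\,U_B^{3m-k}$, $F_k=U_B^{2(3m-k)}$, and $\mathrm{Load}_S=e_0\prod_{i=1}^m(b^{2B}e)$, $\mathrm{Dist}_S=e_0\prod_{i=1}^m((a_1b^Ba_2)^3e)$, $\mathrm{Ver}_S=\prod_{k=1}^{3m}[v_{4k-3}D_kv_{4k-3}\,v_{4k-2}D_kv_{4k-2}\,v_{4k-1}E_kv_{4k-1}\,v_{4k}F_kv_{4k}]$, and $w_S=\mathrm{Load}_S\mathrm{Dist}_S\mathrm{Ver}_S$. *)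

theory Defs
  imports Complex_Main "HOL-Library.Multiset"
begin

datatype sym = Sa1 | Sa2 | Sb | Se0 | Se | Sc1 | Sc2 | Sx | Sy

text \<open>Queue automaton configurations (Q, x): queue contents Q, remaining input x.
  One step from Q || s x: push to Q s || x, or, if Q = s Q', pop to Q' || x.\<close>
inductive qstep :: "sym list \<times> sym list \<Rightarrow> sym list \<times> sym list \<Rightarrow> bool" where
  push: "qstep (Q, s # x) (Q @ [s], x)"
| pop:  "qstep (s # Q, s # x) (Q, x)"

definition accepted :: "sym list \<times> sym list \<Rightarrow> bool" where
  "accepted C \<longleftrightarrow> qstep\<^sup>*\<^sup>* C ([], [])"

text \<open>w is a square: a shuffle x1 y1 ... xk yk of u with itself,
  u = x1...xk = y1...yk.\<close>
definition is_square :: "'a list \<Rightarrow> bool" where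
  "is_square w \<longleftrightarrow> (\<exists>u xs ys. length xs = length ys \<and> concat xs = u \<and> concat ys = u
      \<and> w = concat (map2 (@) xs ys))"

definition pw :: "'a list \<Rightarrow> nat \<Rightarrow> 'a list" where
  "pw u i = concat (replicate i u)"

text \<open>3-Partition. The instance is the list ns = [n_1,...,n_{3m}] (so n_k = ns ! (k-1)).\<close>
definition tp_B :: "nat \<Rightarrow> nat list \<Rightarrow> nat" where
  "tp_B m ns = sum_list ns div m"

definition three_partition_instance :: "nat \<Rightarrow> nat list \<Rightarrow> bool" where
  "three_partition_instance m ns \<longleftrightarrow>
     0 < m \<and> length ns = 3 * m \<and> m dvd sum_list ns \<and>
     (\<forall>n\<in>set ns. real (tp_B m ns) / 4 < real n \<and> real n < real (tp_B m ns) / 2)"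

definition three_partition_yes :: "nat \<Rightarrow> nat list \<Rightarrow> bool" where
  "three_partition_yes m ns \<longleftrightarrow> three_partition_instance m ns \<and>
     (\<exists>f :: nat \<Rightarrow> nat. (\<forall>i < 3 * m. f i < m) \<and>
        (\<forall>j < m. card {i. i < 3 * m \<and> f i = j} = 3 \<and>
                 (\<Sum>i\<in>{i. i < 3 * m \<and> f i = j}. ns ! i) = tp_B m ns))"

definition U :: "nat \<Rightarrow> sym list" where
  "U l = [Sa1, Sa1] @ replicate l Sb @ [Sa2, Sa2]"

definition vv :: "nat \<Rightarrow> sym list" where
  "vv l = [Sc1] @ replicate l Sx @ replicate l Sy @ [Sc2]"

definition blk :: "nat \<Rightarrow> sym list" where
  "blk l = [Sa1] @ replicate l Sb @ [Sa2]"

definition Dk :: "nat \<Rightarrow> nat list \<Rightarrow> nat \<Rightarrow> sym list" where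
  "Dk m ns k = pw (U (ns ! (k - 1))) (3 * m - k + 1)"

definition Ek :: "nat \<Rightarrow> nat list \<Rightarrow> nat \<Rightarrow> sym list" where
  "Ek m ns k = pw (U (tp_B m ns)) (3 * m - k) @ blk (ns ! (k - 1)) @ pw (U (tp_B m ns)) (3 * m - k)"

definition Fk :: "nat \<Rightarrow> nat list \<Rightarrow> nat \<Rightarrow> sym list" where
  "Fk m ns k = pw (U (tp_B m ns)) (2 * (3 * m - k))"

definition Load :: "nat \<Rightarrow> nat list \<Rightarrow> sym list" where
  "Load m ns = Se0 # concat (replicate m (replicate (2 * tp_B m ns) Sb @ [Se]))"

definition Dist :: "nat \<Rightarrow> nat list \<Rightarrow> sym list" where
  "Dist m ns = Se0 # concat (replicate m (pw (blk (tp_B m ns)) 3 @ [Se]))"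

definition Ver :: "nat \<Rightarrow> nat list \<Rightarrow> sym list" where
  "Ver m ns = concat (map (\<lambda>k.
       vv (4*k-3) @ Dk m ns k @ vv (4*k-3) @
       vv (4*k-2) @ Dk m ns k @ vv (4*k-2) @
       vv (4*k-1) @ Ek m ns k @ vv (4*k-1) @
       vv (4*k) @ Fk m ns k @ vv (4*k)) [1..<3 * m + 1])"

definition wS :: "nat \<Rightarrow> nat list \<Rightarrow> sym list" where
  "wS m ns = Load m ns @ Dist m ns @ Ver m ns"

end

theory Submission
  imports Defs
begin


definition tr :: "sym list \<Rightarrow> sym list \<Rightarrow> sym list \<Rightarrow> bool" where
  "tr w Q Q' \<longleftrightarrow> (\<forall>R rest. qstep\<^sup>*\<^sup>* (Q @ R, w @ rest) (R @ Q', rest))"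

lemma tr_comp: "tr w1 Q1 Q1' \<Longrightarrow> tr w2 Q2 Q2' \<Longrightarrow> tr (w1 @ w2) (Q1 @ Q2) (Q1' @ Q2')"
  unfolding tr_def
proof (intro allI)
  fix R rest
  assume h1: "\<forall>R rest. qstep\<^sup>*\<^sup>* (Q1 @ R, w1 @ rest) (R @ Q1', rest)"
    and h2: "\<forall>R rest. qstep\<^sup>*\<^sup>* (Q2 @ R, w2 @ rest) (R @ Q2', rest)"
  have a: "qstep\<^sup>*\<^sup>* ((Q1 @ Q2) @ R, (w1 @ w2) @ rest) (Q2 @ (R @ Q1'), w2 @ rest)"
    using h1[rule_format, of "Q2 @ R" "w2 @ rest"] by simp
  have b: "qstep\<^sup>*\<^sup>* (Q2 @ (R @ Q1'), w2 @ rest) ((R @ Q1') @ Q2', rest)"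
    using h2 by blast
  show "qstep\<^sup>*\<^sup>* ((Q1 @ Q2) @ R, (w1 @ w2) @ rest) (R @ Q1' @ Q2', rest)"
    using rtranclp_trans[OF a b] by simp
qed

lemma tr_conv: "tr w Q Q' \<Longrightarrow> w = w2 \<Longrightarrow> Q = Q2 \<Longrightarrow> Q' = Q2' \<Longrightarrow> tr w2 Q2 Q2'"
  by simp

lemma tr_nil: "tr [] [] []"
  unfolding tr_def by simp

lemma tr_push: "tr [s] [] [s]"
  unfolding tr_def by (auto intro: qstep.push)

lemma tr_pop: "tr [s] [s] []"
  unfolding tr_def by (auto intro: qstep.pop)

lemma tr_push_all: "tr xs [] xs"
proof (induction xs)
  case Nil then show ?case by (rule tr_nil)
next
  case (Cons x xs)
  from tr_comp[OF tr_push Cons] show ?case by simp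
qed

lemma tr_pop_all: "tr xs xs []"
proof (induction xs)
  case Nil then show ?case by (rule tr_nil)
next
  case (Cons x xs)
  from tr_comp[OF tr_pop Cons] show ?case by simp
qed

lemma tr_concat_map:
  "(\<And>x. x \<in> set xs \<Longrightarrow> tr (f x) (g x) (h x)) \<Longrightarrow>
   tr (concat (map f xs)) (concat (map g xs)) (concat (map h xs))"
proof (induction xs)
  case Nil then show ?case by (simp add: tr_nil)
next
  case (Cons x xs)
  then show ?case using tr_comp[of "f x" "g x" "h x"] by simp
qed

lemma tr_wrap:
  assumes "tr w Q Q'"
  shows "qstep\<^sup>*\<^sup>* (Q, v @ w @ v @ rest) (Q', rest)"
proof -
  have a: "qstep\<^sup>*\<^sup>* ([] @ Q, v @ (w @ v @ rest)) (Q @ v, w @ v @ rest)"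
    using tr_push_all[of v] unfolding tr_def by blast
  have b: "qstep\<^sup>*\<^sup>* (Q @ v, w @ (v @ rest)) (v @ Q', v @ rest)"
    using assms unfolding tr_def by blast
  have c: "qstep\<^sup>*\<^sup>* (v @ Q', v @ rest) (Q' @ [], rest)"
    using tr_pop_all[of v] unfolding tr_def by blast
  show ?thesis using a b c by simp
qed

lemma pw_len: "pw u (length xs) = concat (map (\<lambda>_. u) xs)"
  by (simp add: pw_def map_replicate_const)

lemma pw_add: "pw u (a + b) = pw u a @ pw u b"
  by (simp add: pw_def replicate_add)

lemma tr_rot:
  assumes "i \<le> n"
  shows "tr (U n) (blk i) (blk (n - i))"
proof -
  have "tr ([Sa1] @ [Sa1] @ replicate i Sb @ replicate (n-i) Sb @ [Sa2] @ [Sa2])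
           ([Sa1] @ [] @ replicate i Sb @ [] @ [Sa2] @ [])
           ([] @ [Sa1] @ [] @ replicate (n-i) Sb @ [] @ [Sa2])"
    by (intro tr_comp tr_pop tr_push tr_pop_all tr_push_all)
  then show ?thesis
    by (rule tr_conv) (use assms in \<open>simp_all add: U_def blk_def replicate_add[symmetric]\<close>)
qed

lemma tr_rot_list:
  assumes "\<forall>i\<in>set xs. i \<le> n"
  shows "tr (concat (map (\<lambda>_. U n) xs)) (concat (map blk xs)) (concat (map (\<lambda>i. blk (n - i)) xs))"
  by (rule tr_concat_map) (use assms tr_rot in auto)

lemma blk_load:
  assumes "p \<le> B"
  shows "tr (blk B) (replicate (B - p) Sb) (blk p)"
proof -
  have "tr ([Sa1] @ replicate p Sb @ replicate (B-p) Sb @ [Sa2])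
           ([] @ [] @ replicate (B-p) Sb @ [])
           ([Sa1] @ replicate p Sb @ [] @ [Sa2])"
    by (intro tr_comp tr_pop tr_push tr_pop_all tr_push_all)
  then show ?thesis
    by (rule tr_conv) (use assms in \<open>simp_all add: blk_def replicate_add[symmetric]\<close>)
qed

lemma run_square:
  "qstep\<^sup>*\<^sup>* C ([], []) \<Longrightarrow> \<exists>xs ys. length xs = length ys \<and> fst C @ concat xs = concat ys
     \<and> snd C = concat (map2 (@) xs ys)"
proof (induction rule: converse_rtranclp_induct)
  case base
  then show ?case by (intro exI[of _ "[]"]) simp
next
  case (step y z)
  then obtain xs ys where h: "length xs = length ys" "fst z @ concat xs = concat ys"
     "snd z = concat (map2 (@) xs ys)" by blast
  from step(1) show ?case
  proof cases
    case (push Q s x)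
    then show ?thesis using h by (intro exI[of _ "[s] # xs"] exI[of _ "[] # ys"]) simp
  next
    case (pop s Q x)
    then show ?thesis using h by (intro exI[of _ "[] # xs"] exI[of _ "[s] # ys"]) simp
  qed
qed



lemma phase:
  assumes le_n: "\<forall>x\<in>set js. x \<le> n" and inn: "n \<in> set js" and le_B: "\<forall>x\<in>set js. x \<le> B"
    and len: "length js = Suc r"
  shows "\<exists>js'. mset js' = mset js - {#n#} \<and>
    qstep\<^sup>*\<^sup>* (concat (map blk js),
      vv a @ pw (U n) (Suc r) @ vv a @ vv b @ pw (U n) (Suc r) @ vv b @
      vv c @ (pw (U B) r @ blk n @ pw (U B) r) @ vv c @ vv d @ pw (U B) (2 * r) @ vv d @ rest)
      (concat (map blk js'), rest)"
proof -
  obtain A Bs where js: "js = A @ n # Bs" using split_list[OF inn] by blast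
  have r: "r = length A + length Bs" using len js by simp
  let ?Q = "concat (map blk js)"
  let ?Q1 = "concat (map (\<lambda>i. blk (n - i)) js)"
  have t1: "tr (pw (U n) (Suc r)) ?Q ?Q1"
    using tr_rot_list[OF le_n] len pw_len[of "U n" js] by simp
  have "tr (pw (U n) (Suc r)) ?Q1 (concat (map (\<lambda>i. blk (n - (n - i))) js))"
    using tr_rot_list[of "map (\<lambda>i. n - i) js" n] len pw_len[of "U n" js] by (simp add: o_def)
  moreover have "concat (map (\<lambda>i. blk (n - (n - i))) js) = ?Q"
    using le_n by (intro arg_cong[where f=concat] map_cong) auto
  ultimately have t2: "tr (pw (U n) (Suc r)) ?Q1 ?Q" by simp
  let ?CA = "concat (map (\<lambda>i. blk (B - i)) A)"
  let ?CB = "concat (map (\<lambda>i. blk (B - i)) Bs)"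
  let ?Q3 = "?CA @ pw (U B) (length Bs) @ ?CB @ pw (U B) (length A)"
  have leA: "\<forall>i\<in>set A. i \<le> B" and leBs: "\<forall>i\<in>set Bs. i \<le> B" using le_B js by auto
  have "tr ((concat (map (\<lambda>_. U B) A) @ pw (U B) (length Bs)) @ (blk n @ (concat (map (\<lambda>_. U B) Bs) @ pw (U B) (length A))))
           ((concat (map blk A) @ []) @ (blk n @ (concat (map blk Bs) @ [])))
           ((?CA @ pw (U B) (length Bs)) @ ([] @ (?CB @ pw (U B) (length A))))"
    by (intro tr_comp tr_rot_list leA leBs tr_push_all tr_pop_all)
  moreover have e1: "pw (U B) r = concat (map (\<lambda>_. U B) A) @ pw (U B) (length Bs)"
    by (simp add: r pw_add pw_len)
  moreover have e2: "pw (U B) r = concat (map (\<lambda>_. U B) Bs) @ pw (U B) (length A)"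
    by (simp add: r pw_add pw_len add.commute[of "length A"])
  ultimately have t3: "tr (pw (U B) r @ blk n @ pw (U B) r) ?Q ?Q3"
    by (rule_tac tr_conv) (simp_all add: js)
  have "tr (concat (map (\<lambda>_. U B) (map (\<lambda>i. B - i) A)) @ pw (U B) (length Bs) @ concat (map (\<lambda>_. U B) (map (\<lambda>i. B - i) Bs)) @ pw (U B) (length A))
          (concat (map blk (map (\<lambda>i. B - i) A)) @ pw (U B) (length Bs) @ concat (map blk (map (\<lambda>i. B - i) Bs)) @ pw (U B) (length A))
          (concat (map (\<lambda>i. blk (B - i)) (map (\<lambda>i. B - i) A)) @ [] @ concat (map (\<lambda>i. blk (B - i)) (map (\<lambda>i. B - i) Bs)) @ [])"
    by (intro tr_comp tr_rot_list tr_pop_all) auto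
  moreover have "concat (map (\<lambda>i. blk (B - i)) (map (\<lambda>i. B - i) A)) = concat (map blk A)"
    using leA by (simp add: o_def) (intro arg_cong[where f=concat] map_cong, auto)
  moreover have "concat (map (\<lambda>i. blk (B - i)) (map (\<lambda>i. B - i) Bs)) = concat (map blk Bs)"
    using leBs by (simp add: o_def) (intro arg_cong[where f=concat] map_cong, auto)
  moreover have "2 * r = length A + (length Bs + (length Bs + length A))" by (simp add: r)
  then have "pw (U B) (2 * r) = concat (map (\<lambda>_. U B) A) @ pw (U B) (length Bs) @ concat (map (\<lambda>_. U B) Bs) @ pw (U B) (length A)"
    by (simp only: pw_add pw_len)
  ultimately have t4: "tr (pw (U B) (2 * r)) ?Q3 (concat (map blk (A @ Bs)))"
    by (rule_tac tr_conv) (simp_all add: o_def)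
  have "qstep\<^sup>*\<^sup>* (?Q, vv a @ pw (U n) (Suc r) @ vv a @ vv b @ pw (U n) (Suc r) @ vv b @
      vv c @ (pw (U B) r @ blk n @ pw (U B) r) @ vv c @ vv d @ pw (U B) (2 * r) @ vv d @ rest)
      (?Q1, vv b @ pw (U n) (Suc r) @ vv b @
      vv c @ (pw (U B) r @ blk n @ pw (U B) r) @ vv c @ vv d @ pw (U B) (2 * r) @ vv d @ rest)"
    by (rule tr_wrap[OF t1])
  also have "qstep\<^sup>*\<^sup>* \<dots> (?Q, vv c @ (pw (U B) r @ blk n @ pw (U B) r) @ vv c @ vv d @ pw (U B) (2 * r) @ vv d @ rest)"
    by (rule tr_wrap[OF t2])
  also have "qstep\<^sup>*\<^sup>* \<dots> (?Q3, vv d @ pw (U B) (2 * r) @ vv d @ rest)"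
    by (rule tr_wrap[OF t3])
  also have "qstep\<^sup>*\<^sup>* \<dots> (concat (map blk (A @ Bs)), rest)"
    by (rule tr_wrap[OF t4])
  finally show ?thesis using js by (intro exI[of _ "A @ Bs"]) simp
qed



definition phaseW :: "nat \<Rightarrow> nat list \<Rightarrow> nat \<Rightarrow> sym list" where
  "phaseW m ns k = vv (4*k-3) @ Dk m ns k @ vv (4*k-3) @
       vv (4*k-2) @ Dk m ns k @ vv (4*k-2) @
       vv (4*k-1) @ Ek m ns k @ vv (4*k-1) @
       vv (4*k) @ Fk m ns k @ vv (4*k)"

lemma Ver_phase: "Ver m ns = concat (map (phaseW m ns) [1..<3 * m + 1])"
  unfolding Ver_def phaseW_def by simp

lemma inst_le_B:
  assumes "three_partition_instance m ns" "x \<in> set ns"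
  shows "x \<le> tp_B m ns"
proof -
  have "real x < real (tp_B m ns) / 2" using assms unfolding three_partition_instance_def by blast
  then have "real x < real (tp_B m ns)" by linarith
  then show ?thesis by simp
qed

lemma ver_aux:
  assumes inst: "three_partition_instance m ns" and srt: "sorted_wrt (\<ge>) ns"
  shows "3 * m - j = d \<Longrightarrow> j \<le> 3 * m \<Longrightarrow> mset js = mset (drop j ns) \<Longrightarrow>
    qstep\<^sup>*\<^sup>* (concat (map blk js), concat (map (phaseW m ns) [Suc j..<3 * m + 1])) ([], [])"
proof (induction d arbitrary: j js)
  case 0
  have lenns: "length ns = 3 * m" using inst unfolding three_partition_instance_def by simp
  have "j = 3 * m" using 0 by simp
  then have "js = []" using 0 lenns by simp
  then show ?case using \<open>j = 3 * m\<close> by simp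
next
  case (Suc d)
  have lenns: "length ns = 3 * m" using inst unfolding three_partition_instance_def by simp
  have jl: "j < 3 * m" using Suc.prems by simp
  define n where "n = ns ! j"
  have dr: "drop j ns = n # drop (Suc j) ns" using jl lenns n_def by (simp add: Cons_nth_drop_Suc)
  have setjs: "set js = set (drop j ns)" using Suc.prems(3) by (metis set_mset_mset)
  have lenjs: "length js = Suc d" using Suc.prems(3) lenns Suc.prems(1)
    by (metis length_drop size_mset)
  have inn: "n \<in> set js" using setjs dr by simp
  have le_n: "\<forall>x\<in>set js. x \<le> n"
  proof
    fix x assume "x \<in> set js"
    then have "x \<in> set (drop j ns)" using setjs by simp
    then obtain k where k: "k < length (drop j ns)" "x = drop j ns ! k" by (metis in_set_conv_nth)
    then have x: "x = ns ! (j + k)" "j + k < length ns" by auto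
    show "x \<le> n"
    proof (cases "k = 0")
      case True then show ?thesis using x n_def by simp
    next
      case False then show ?thesis using x n_def srt sorted_wrt_nth_less[OF srt, of j "j+k"] by simp
    qed
  qed
  have le_B: "\<forall>x\<in>set js. x \<le> tp_B m ns"
    using setjs inst_le_B[OF inst] by (metis in_set_dropD)
  define rest where "rest = concat (map (phaseW m ns) [Suc (Suc j)..<3 * m + 1])"
  obtain js' where js': "mset js' = mset js - {#n#}"
    and run: "qstep\<^sup>*\<^sup>* (concat (map blk js),
      vv (4*Suc j-3) @ pw (U n) (Suc d) @ vv (4*Suc j-3) @ vv (4*Suc j-2) @ pw (U n) (Suc d) @ vv (4*Suc j-2) @
      vv (4*Suc j-1) @ (pw (U (tp_B m ns)) d @ blk n @ pw (U (tp_B m ns)) d) @ vv (4*Suc j-1) @ vv (4*Suc j) @ pw (U (tp_B m ns)) (2 * d) @ vv (4*Suc j) @ rest)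
      (concat (map blk js'), rest)"
    using phase[OF le_n inn le_B lenjs] by blast
  have eqw: "concat (map (phaseW m ns) [Suc j..<3 * m + 1]) = 
      vv (4*Suc j-3) @ pw (U n) (Suc d) @ vv (4*Suc j-3) @ vv (4*Suc j-2) @ pw (U n) (Suc d) @ vv (4*Suc j-2) @
      vv (4*Suc j-1) @ (pw (U (tp_B m ns)) d @ blk n @ pw (U (tp_B m ns)) d) @ vv (4*Suc j-1) @ vv (4*Suc j) @ pw (U (tp_B m ns)) (2 * d) @ vv (4*Suc j) @ rest"
  proof -
    have "[Suc j..<3 * m + 1] = Suc j # [Suc (Suc j)..<3 * m + 1]" using jl by (simp add: upt_conv_Cons)
    moreover have "3 * m - Suc j + 1 = Suc d" "3 * m - Suc j = d" using Suc.prems(1) by auto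
    ultimately show ?thesis
      by (simp add: rest_def phaseW_def Dk_def Ek_def Fk_def n_def)
  qed
  have "mset js' = mset (drop (Suc j) ns)" using js' Suc.prems(3) dr by simp
  then have "qstep\<^sup>*\<^sup>* (concat (map blk js'), rest) ([], [])"
    unfolding rest_def using Suc.IH[of "Suc j" js'] Suc.prems(1) jl by simp
  from rtranclp_trans[OF run this] show ?case using eqw by simp
qed



lemma part1:
  assumes inst: "three_partition_instance m ns" and srt: "sorted_wrt (\<ge>) ns"
    and "mset is = mset ns"
  shows "accepted (concat (map blk is), Ver m ns)"
  using ver_aux[OF inst srt, of 0 "3 * m" "is"] assms(3)
  unfolding accepted_def Ver_phase by simp

lemma group_tr:
  assumes "length g = 3" "sum_list g = B" "\<forall>x\<in>set g. x \<le> B"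
  shows "tr (pw (blk B) 3 @ [Se]) (replicate (2 * B) Sb @ [Se]) (concat (map blk g))"
proof -
  have "\<exists>p q r. g = [p, q, r]" using assms(1)
    by (auto simp: length_Suc_conv numeral_3_eq_3)
  then obtain p q r where g: "g = [p, q, r]" by blast
  have le: "p \<le> B" "q \<le> B" "r \<le> B" using assms(3) g by auto
  have s: "p + q + r = B" using assms(2) g by simp
  have "tr (blk B @ blk B @ blk B @ [Se]) (replicate (B - p) Sb @ replicate (B - q) Sb @ replicate (B - r) Sb @ [Se])
          (blk p @ blk q @ blk r @ [])"
    by (rule tr_comp[OF blk_load[OF le(1)] tr_comp[OF blk_load[OF le(2)] tr_comp[OF blk_load[OF le(3)] tr_pop]]])
  moreover have "replicate (B - p) Sb @ replicate (B - q) Sb @ replicate (B - r) Sb = replicate (2 * B) Sb"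
  proof -
    have "B - p + (B - q + (B - r)) = 2 * B" using s le by simp
    then show ?thesis by (metis replicate_add)
  qed
  then have "replicate (B - p) Sb @ replicate (B - q) Sb @ replicate (B - r) Sb @ [Se] = replicate (2 * B) Sb @ [Se]"
    by (metis append_assoc)
  ultimately show ?thesis by (rule_tac tr_conv) (simp_all add: g pw_def numeral_3_eq_3)
qed

lemma cc: "concat (concat xss) = concat (map concat xss)"
  by (induction xss) auto

lemma part2_run:
  assumes "length gs = m" "\<forall>g\<in>set gs. length g = 3 \<and> sum_list g = tp_B m ns \<and> (\<forall>x\<in>set g. x \<le> tp_B m ns)"
  shows "qstep\<^sup>*\<^sup>* ([], wS m ns) (concat (map blk (concat gs)), Ver m ns)"
proof -
  let ?B = "tp_B m ns"
  let ?LR = "concat (replicate m (replicate (2 * ?B) Sb @ [Se]))"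
  let ?DR = "concat (replicate m (pw (blk ?B) 3 @ [Se]))"
  have a: "qstep\<^sup>*\<^sup>* ([] @ [], Load m ns @ (Dist m ns @ Ver m ns)) ([] @ Load m ns, Dist m ns @ Ver m ns)"
    using tr_push_all[of "Load m ns"] unfolding tr_def by blast
  have b: "qstep (Se0 # ?LR, Se0 # (?DR @ Ver m ns)) (?LR, ?DR @ Ver m ns)" by (rule qstep.pop)
  have "tr (concat (map (\<lambda>_. pw (blk ?B) 3 @ [Se]) gs)) (concat (map (\<lambda>_. replicate (2 * ?B) Sb @ [Se]) gs))
          (concat (map (\<lambda>g. concat (map blk g)) gs))"
    by (rule tr_concat_map) (use assms(2) group_tr in blast)
  then have "tr ?DR ?LR (concat (map blk (concat gs)))"
    using assms(1) by (simp add: map_replicate_const map_concat cc o_def)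
  then have c: "qstep\<^sup>*\<^sup>* (?LR @ [], ?DR @ Ver m ns) ([] @ concat (map blk (concat gs)), Ver m ns)"
    unfolding tr_def by blast
  have a': "qstep\<^sup>*\<^sup>* ([], wS m ns) (Se0 # ?LR, Se0 # (?DR @ Ver m ns))"
    using a unfolding wS_def Load_def Dist_def by simp
  have c': "qstep\<^sup>*\<^sup>* (?LR, ?DR @ Ver m ns) (concat (map blk (concat gs)), Ver m ns)"
    using c by simp
  show ?thesis using rtranclp_trans[OF rtranclp.rtrancl_into_rtrancl[OF a' b] c'] .
qed



lemma yes_gs:
  assumes yes: "three_partition_yes m ns"
  shows "\<exists>gs. length gs = m \<and> (\<forall>g\<in>set gs. length g = 3 \<and> sum_list g = tp_B m ns \<and> (\<forall>x\<in>set g. x \<le> tp_B m ns))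
     \<and> mset (concat gs) = mset ns"
proof -
  have inst: "three_partition_instance m ns" using yes unfolding three_partition_yes_def by blast
  have lenns: "length ns = 3 * m" using inst unfolding three_partition_instance_def by simp
  obtain f :: "nat \<Rightarrow> nat" where f1: "\<forall>i < 3 * m. f i < m"
    and f2: "\<forall>j < m. card {i. i < 3 * m \<and> f i = j} = 3 \<and>
                 (\<Sum>i\<in>{i. i < 3 * m \<and> f i = j}. ns ! i) = tp_B m ns"
    using yes unfolding three_partition_yes_def by blast
  define S where "S j = {i. i < 3 * m \<and> f i = j}" for j
  define L where "L j = sorted_list_of_set (S j)" for j
  have finS: "finite (S j)" for j unfolding S_def by simp
  have setL: "set (L j) = S j" for j using finS by (simp add: L_def)
  have distL: "distinct (L j)" for j by (simp add: L_def)
  define gs where "gs = map (\<lambda>j. map (nth ns) (L j)) [0..<m]"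
  have "\<forall>g\<in>set gs. length g = 3 \<and> sum_list g = tp_B m ns \<and> (\<forall>x\<in>set g. x \<le> tp_B m ns)"
  proof
    fix g assume "g \<in> set gs"
    then obtain j where j: "j < m" "g = map (nth ns) (L j)" unfolding gs_def by auto
    have "length g = 3" using j f2 finS by (simp add: L_def S_def)
    moreover have "sum_list g = tp_B m ns"
      using j f2 distL setL by (simp add: sum_list_distinct_conv_sum_set S_def)
    moreover have "\<forall>x\<in>set g. x \<le> tp_B m ns"
    proof
      fix x assume "x \<in> set g"
      then obtain i where "i \<in> S j" "x = ns ! i" using j setL by auto
      then have "x \<in> set ns" using lenns by (auto simp: S_def)
      then show "x \<le> tp_B m ns" by (rule inst_le_B[OF inst])
    qed
    ultimately show "length g = 3 \<and> sum_list g = tp_B m ns \<and> (\<forall>x\<in>set g. x \<le> tp_B m ns)" by blast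
  qed
  moreover have "mset (concat gs) = mset ns"
  proof -
    define LL where "LL = concat (map L [0..<m])"
    have cg: "concat gs = map (nth ns) LL" unfolding gs_def LL_def by (simp add: map_concat o_def)
    have ne: "S j \<noteq> {}" if "j < m" for j using f2 that unfolding S_def by (metis card.empty zero_neq_numeral)
    have inj: "inj_on L {0..<m}"
    proof (rule inj_onI)
      fix j k assume "j \<in> {0..<m}" "k \<in> {0..<m}" "L j = L k"
      then have "S j = S k" "S j \<noteq> {}" using setL ne by (metis, auto)
      then obtain i where "i \<in> S j" "i \<in> S k" by blast
      then show "j = k" unfolding S_def by simp
    qed
    have "distinct LL" unfolding LL_def distinct_concat_iff
    proof (intro conjI allI impI)
      show "distinct (removeAll [] (map L [0..<m]))"
        using inj by (simp add: distinct_map distinct_removeAll)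
      show "distinct ys" if "ys \<in> set (map L [0..<m])" for ys using that distL by auto
      show "set ys \<inter> set zs = {}" if "ys \<in> set (map L [0..<m]) \<and> zs \<in> set (map L [0..<m]) \<and> ys \<noteq> zs" for ys zs
        using that setL unfolding S_def by auto
    qed
    moreover have "set LL = set [0..<3 * m]"
      using f1 setL unfolding LL_def S_def by auto
    ultimately have "mset LL = mset [0..<3 * m]"
      by (metis distinct_upt set_eq_iff_mset_eq_distinct)
    then have "mset (map (nth ns) LL) = mset (map (nth ns) [0..<length ns])"
      using lenns by simp
    then show ?thesis using cg by (simp add: map_nth)
  qed
  moreover have "length gs = m" unfolding gs_def by simp
  ultimately show ?thesis by blast
qed


theorem lemma5:
  fixes m :: nat and ns :: "nat list"
  assumes "three_partition_instance m ns"
    and "sorted_wrt (\<ge>) ns"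
  shows "(\<forall>is. mset is = mset ns \<longrightarrow> accepted (concat (map blk is), Ver m ns))
       \<and> (three_partition_yes m ns \<longrightarrow>
            qstep\<^sup>*\<^sup>* ([], wS m ns) ([], []) \<and> is_square (wS m ns))"
proof (intro conjI allI impI)
  fix "is" assume "mset is = mset ns"
  then show "accepted (concat (map blk is), Ver m ns)" using part1[OF assms] by blast
next
  assume yes: "three_partition_yes m ns"
  then obtain gs where gs: "length gs = m"
    "\<forall>g\<in>set gs. length g = 3 \<and> sum_list g = tp_B m ns \<and> (\<forall>x\<in>set g. x \<le> tp_B m ns)"
    "mset (concat gs) = mset ns" using yes_gs by blast
  have "qstep\<^sup>*\<^sup>* (concat (map blk (concat gs)), Ver m ns) ([], [])"
    using part1[OF assms gs(3)] unfolding accepted_def .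
  then show run: "qstep\<^sup>*\<^sup>* ([], wS m ns) ([], [])"
    using rtranclp_trans[OF part2_run[OF gs(1,2)]] by blast
  from run_square[OF run] obtain xs ys where
    "length xs = length ys" "concat xs = concat ys" "wS m ns = concat (map2 (@) xs ys)" by auto
  then show "is_square (wS m ns)" unfolding is_square_def by blast
qed

end
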